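(* Let $\alpha>0$ and let $\mu$ be a positive Borel measure on $\mathbb{C}^+$ which is a sampling measure for $\mathcal{A}_\alpha(\mathbb{C}^+)$ with constants $A,B>0$, i.e. $$A\|F\|_{\mathcal{A}_\alpha}^2\le\int_{\mathbb{C}^+}|F(z)|^2 s^{\alpha}\,d\mu(z)\le B\|F\|_{\mathcal{A}_\alpha}^2\quad\text{for all }F\in\mathcal{A}_\alpha(\mathbb{C}^+),$$ where $z=x+is$. If $R\in(0,1)$ and $\mu(\mathcal{D}_R(z))=0$ for some $z\in\mathbb{C}^+$, then $$R\le 1-\left(\frac{1}{4^{\alpha+1}\pi}\,\frac{A}{B}\right)^{1/\alpha}.$$
   Context: $\mathbb{C}^+=\{x+is:x\in\mathbb{R},s>0\}$. $\mathcal{A}_\alpha(\mathbb{C}^+)$ is the weighted Bergman space of holomorphic functions $F$ on $\mathbb{C}^+$ with $\|F\|_{\mathcal{A}_\alpha}^2=\int_{\mathbb{C}^+}|F(x+is)|^2 s^\alpha\,dx\,ds<\infty$. The pseudohyperbolic metric is $\rho(z,w)=\left|\frac{z-w}{z-\overline{w}}\right|$ and $\mathcal{D}_R(z)=\{w\in\mathbb{C}^+:\rho(z,w)<R\}$. *)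

theory Defs
  imports "HOL-Complex_Analysis.Complex_Analysis"
begin

definition upper_half_plane :: "complex set" where
  "upper_half_plane = {z. Im z > 0}"

definition pseudohyp :: "complex \<Rightarrow> complex \<Rightarrow> real" where
  "pseudohyp z w = cmod ((z - w) / (z - cnj w))"

definition pdisc :: "real \<Rightarrow> complex \<Rightarrow> complex set" where
  "pdisc R z = {w \<in> upper_half_plane. pseudohyp z w < R}"

definition bergman_norm2 :: "real \<Rightarrow> (complex \<Rightarrow> complex) \<Rightarrow> ennreal" where
  "bergman_norm2 \<alpha> F =
     (\<integral>\<^sup>+ w \<in> upper_half_plane. ennreal ((cmod (F w))\<^sup>2 * Im w powr \<alpha>) \<partial>lborel)"

definition bergman_space :: "real \<Rightarrow> (complex \<Rightarrow> complex) set" where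
  "bergman_space \<alpha> = {F. F holomorphic_on upper_half_plane \<and> bergman_norm2 \<alpha> F < \<infinity>}"

definition weighted_mu_integral :: "complex measure \<Rightarrow> real \<Rightarrow> (complex \<Rightarrow> complex) \<Rightarrow> ennreal" where
  "weighted_mu_integral \<mu> \<alpha> F =
     (\<integral>\<^sup>+ w \<in> upper_half_plane. ennreal ((cmod (F w))\<^sup>2 * Im w powr \<alpha>) \<partial>\<mu>)"

end

theory Submission
  imports Defs
begin

lemma lborel_complex_distr:
  "(lborel :: complex measure) = distr (lborel \<Otimes>\<^sub>M lborel) borel (\<lambda>p. Complex (fst p) (snd p))"
proof (rule lborel_eqI)
  fix l u :: complex
  assume le: "\<And>b. b \<in> Basis \<Longrightarrow> l \<bullet> b \<le> u \<bullet> b"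
  have m: "(\<lambda>p. Complex (fst p) (snd p)) \<in> (lborel \<Otimes>\<^sub>M lborel :: (real \<times> real) measure) \<rightarrow>\<^sub>M borel"
    unfolding lborel_prod measurable_lborel2 by (intro borel_measurable_continuous_onI continuous_intros)
  have pre: "(\<lambda>p. Complex (fst p) (snd p)) -` box l u \<inter> space (lborel \<Otimes>\<^sub>M lborel)
      = box (Re l) (Re u) \<times> box (Im l) (Im u)"
    by (auto simp: box_def Basis_complex_def space_pair_measure inner_complex_def)
  show "emeasure (distr (lborel \<Otimes>\<^sub>M lborel) borel (\<lambda>p. Complex (fst p) (snd p))) (box l u) = (\<Prod>b\<in>Basis. (u - l) \<bullet> b)"
    using le[of 1] le[of \<i>]
    by (simp add: emeasure_distr[OF m] pre lborel.emeasure_pair_measure_Times Basis_complex_def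
        inner_complex_def ennreal_mult[symmetric])
qed simp



lemma L1:
  fixes c :: real assumes c: "c > 0"
  shows "(\<integral>\<^sup>+x. ennreal (1/(x^2+c^2)^2) * indicator {0..} x \<partial>lborel) = ennreal (pi/(4*c^3))"
proof -
  define F where "F x = x/(x^2+c^2)/(2*c^2) + arctan (x/c)/(2*c^3)" for x
  have d: "DERIV F x :> 1/(x^2+c^2)^2" for x
  proof -
    have pos: "x^2+c^2 > 0" using c by (simp add: add_nonneg_pos)
    have g: "DERIV (\<lambda>x. x^2+c^2) x :> 2*x" by (auto intro!: derivative_eq_intros)
    have d1: "DERIV (\<lambda>x. x/(x^2+c^2)) x :> (1*(x^2+c^2) - (2*x)*x)/(x^2+c^2)^Suc (Suc 0)"
    proof -
      have gx: "x^2+c^2 \<noteq> 0" using pos by linarith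
      show ?thesis using DERIV_quotient[OF DERIV_ident g gx] by simp
    qed
    have d2: "DERIV (\<lambda>x. x/c) x :> 1/c" using DERIV_cdivide[OF DERIV_ident, of c x] by simp
    have d3: "DERIV (\<lambda>x. arctan (x/c)) x :> inverse (1+(x/c)^2) * (1/c)"
      using DERIV_chain2[OF DERIV_arctan d2] .
    have d4: "DERIV F x :> (1*(x^2+c^2) - (2*x)*x)/(x^2+c^2)^Suc (Suc 0)/(2*c^2) + inverse (1+(x/c)^2) * (1/c)/(2*c^3)"
      unfolding F_def by (rule DERIV_add[OF DERIV_cdivide[OF d1] DERIV_cdivide[OF d3]])
    define q where "q = x^2+c^2"
    have qp: "q > 0" using pos by (simp add: q_def)
    have e1: "(1*(x^2+c^2) - (2*x)*x) = 2*c^2 - q" by (simp add: q_def power2_eq_square)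
    have e0: "(x^2+c^2)^Suc (Suc 0) = q^2" by (simp add: q_def power2_eq_square)
    have e2: "inverse (1+(x/c)^2) = c^2/q" using c by (simp add: q_def field_simps)
    have e3: "(2*c^2 - q)/q^2/(2*c^2) + c^2/q * (1/c)/(2*c^3) = 1/q^2"
      using c qp by (simp add: field_simps eval_nat_numeral)
    have e: "(1*(x^2+c^2) - (2*x)*x)/(x^2+c^2)^Suc (Suc 0)/(2*c^2) + inverse (1+(x/c)^2) * (1/c)/(2*c^3) = 1/q^2"
      unfolding e1 e0 e2 by (rule e3)
    show ?thesis using DERIV_cong[OF d4 e] by (simp add: q_def)
  qed
  have lim: "(F \<longlongrightarrow> pi/(4*c^3)) at_top"
  proof -
    have "((\<lambda>x. x/(x^2+c^2)/(2*c^2)) \<longlongrightarrow> 0) at_top"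
      using c by real_asymp
    moreover have "((\<lambda>x. arctan (x/c)/(2*c^3)) \<longlongrightarrow> (pi/2)/(2*c^3)) at_top"
    proof -
      have "filterlim (\<lambda>x. x/c) at_top at_top"
        using c by real_asymp
      hence "((\<lambda>x. arctan (x/c)) \<longlongrightarrow> pi/2) at_top"
        using tendsto_arctan_at_top filterlim_compose by blast
      thus ?thesis using c by (intro tendsto_divide) auto
    qed
    ultimately have "(F \<longlongrightarrow> 0 + (pi/2)/(2*c^3)) at_top"
      unfolding F_def by (intro tendsto_add)
    thus ?thesis by (simp add: field_simps)
  qed
  have "(\<integral>\<^sup>+x. ennreal (1/(x^2+c^2)^2) * indicator {0..} x \<partial>lborel) = pi/(4*c^3) - F 0"
    by (rule nn_integral_FTC_atLeast[OF _ d _ lim]) auto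
  thus ?thesis by (simp add: F_def)
qed

lemma L2:
  fixes c a :: real assumes c: "c > 0"
  shows "(\<integral>\<^sup>+x. ennreal (1/((x-a)^2+c^2)^2) \<partial>lborel) \<le> ennreal (pi/(2*c^3))"
proof -
  define g where "g x = ennreal (1/(x^2+c^2)^2) * indicator {0..} x" for x
  have gm[measurable]: "g \<in> borel_measurable borel" unfolding g_def by measurable
  have "(\<integral>\<^sup>+x. ennreal (1/((x-a)^2+c^2)^2) \<partial>lborel) = (\<integral>\<^sup>+x. ennreal (1/((a + 1*x-a)^2+c^2)^2) \<partial>lborel)"
    by (subst nn_integral_real_affine[of _ 1 a]) auto
  also have "\<dots> \<le> (\<integral>\<^sup>+x. g x + g (0 + (-1) * x) \<partial>lborel)"
    by (intro nn_integral_mono) (auto simp: g_def indicator_def)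
  also have "\<dots> = (\<integral>\<^sup>+x. g x \<partial>lborel) + (\<integral>\<^sup>+x. g (0 + (-1) * x) \<partial>lborel)"
    by (intro nn_integral_add) auto
  also have "(\<integral>\<^sup>+x. g (0 + (-1) * x) \<partial>lborel) = (\<integral>\<^sup>+x. g x \<partial>lborel)"
    using nn_integral_real_affine[OF gm, of "-1" 0] by simp
  also have "(\<integral>\<^sup>+x. g x \<partial>lborel) = ennreal (pi/(4*c^3))"
    unfolding g_def by (rule L1[OF c])
  also have "ennreal (pi/(4*c^3)) + ennreal (pi/(4*c^3)) = ennreal (pi/(2*c^3))"
    using c by (subst ennreal_plus[symmetric]) (auto simp: field_simps)
  finally show ?thesis .
qed

lemma L3:
  fixes b :: real assumes b: "b > 0"
  shows "(\<integral>\<^sup>+s. ennreal (pi/(2*(s+b)^3)) * indicator {0..} s \<partial>lborel) = ennreal (pi/(4*b^2))"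
proof -
  define F where "F s = - pi/(4*(s+b)^2)" for s
  have d0: "DERIV (\<lambda>u. - pi/(4*u^2)) u :> pi/(2*u^3)" if "u > 0" for u
    using that by (auto intro!: derivative_eq_intros simp: field_simps eval_nat_numeral)
  have d: "DERIV F s :> pi/(2*(s+b)^3)" if "0 \<le> s" for s
    using d0[of "s+b"] that b DERIV_shift[of "\<lambda>u. - pi/(4*u^2)" "pi/(2*(s+b)^3)" s b]
    unfolding F_def by simp
  have lim: "(F \<longlongrightarrow> 0) at_top" unfolding F_def using b by real_asymp
  have "(\<integral>\<^sup>+s. ennreal (pi/(2*(s+b)^3)) * indicator {0..} s \<partial>lborel) = 0 - F 0"
    by (rule nn_integral_FTC_atLeast[OF _ d _ lim]) (use b in auto)
  thus ?thesis by (simp add: F_def)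
qed

lemma L4:
  fixes b \<alpha> :: real assumes b: "b > 0" and al: "\<alpha> > 0"
  shows "(\<integral>\<^sup>+s. ennreal (s powr \<alpha> * (s+b) powr (-\<alpha>-2)) * indicator {0..b} s \<partial>lborel)
         = ennreal (2 powr (-\<alpha>-1)/((\<alpha>+1)*b))"
proof -
  define H where "H s = (s/(s+b)) powr (\<alpha>+1) / ((\<alpha>+1)*b)" for s
  have cont: "continuous_on {0..b} H"
    unfolding H_def using b al
    by (intro continuous_intros continuous_on_powr') (auto intro!: continuous_intros)
  have der: "(H has_vector_derivative (s powr \<alpha> * (s+b) powr (-\<alpha>-2))) (at s)" if "s \<in> {0<..<b}" for s
  proof -
    have s: "s > 0" "s + b > 0" using that b by auto
    have r: "DERIV (\<lambda>s. s/(s+b)) s :> (1*(s+b) - 1 * s)/(s+b)^(Suc (Suc 0))"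
    proof -
      have gx: "s + b \<noteq> 0" using s by linarith
      have g: "DERIV (\<lambda>s. s+b) s :> 1" by (auto intro!: derivative_eq_intros)
      show ?thesis using DERIV_quotient[OF DERIV_ident g gx] by simp
    qed
    have rp: "s/(s+b) > 0" using s by simp
    have p: "DERIV (\<lambda>s. (s/(s+b)) powr (\<alpha>+1)) s :> (\<alpha>+1) * (s/(s+b)) powr (\<alpha>+1-1) * ((1*(s+b) - 1 * s)/(s+b)^(Suc (Suc 0)))"
      using DERIV_chain2[OF has_real_derivative_powr[OF rp] r] .
    have hd: "DERIV H s :> (\<alpha>+1) * (s/(s+b)) powr (\<alpha>+1-1) * ((1*(s+b) - 1 * s)/(s+b)^(Suc (Suc 0))) / ((\<alpha>+1)*b)"
      unfolding H_def by (rule DERIV_cdivide[OF p])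
    moreover have "(\<alpha>+1) * (s/(s+b)) powr (\<alpha>+1-1) * ((1*(s+b) - 1 * s)/(s+b)^(Suc (Suc 0))) / ((\<alpha>+1)*b)
        = s powr \<alpha> * (s+b) powr (-\<alpha>-2)"
    proof -
      have e1: "(s+b) powr (-\<alpha>-2) = 1/((s+b) powr \<alpha> * (s+b)^2)"
      proof -
        have "(s+b) powr (\<alpha>+2) = (s+b) powr \<alpha> * (s+b) powr 2"
          by (rule powr_add)
        also have "(s+b) powr 2 = (s+b)^2" using s by (simp add: powr_numeral)
        finally have 1: "(s+b) powr (\<alpha>+2) = (s+b) powr \<alpha> * (s+b)^2" .
        have "-\<alpha>-2 = -(\<alpha>+2)" by simp
        hence "(s+b) powr (-\<alpha>-2) = inverse ((s+b) powr (\<alpha>+2))"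
          by (simp only: powr_minus)
        thus ?thesis using 1 by (simp add: inverse_eq_divide)
      qed
      have e2: "(s/(s+b)) powr (\<alpha>+1-1) = s powr \<alpha> / (s+b) powr \<alpha>"
        using s by (simp add: powr_divide)
      have e3: "(1*(s+b) - 1 * s) = b" by simp
      have Qp: "(s+b) powr \<alpha> > 0" using s by simp
      have gen: "(\<alpha>+1) * (P / Q) * (b / u^Suc (Suc 0)) / ((\<alpha>+1)*b) = P * (1/(Q*u^2))"
        if "Q > 0" "u > 0" for P Q u
      proof -
        have k: "(\<alpha>+1) * (P / Q) * (b / u^Suc (Suc 0)) = ((\<alpha>+1)*b) * (P * (1/(Q*u^2)))"
          using that by (simp add: power2_eq_square)
        have nz: "(\<alpha>+1)*b \<noteq> 0" using al b by simp
        show ?thesis unfolding k using nz by simp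
      qed
      show ?thesis unfolding e1 e2 e3 by (rule gen[OF Qp s(2)])
    qed
    ultimately show ?thesis by (simp add: has_real_derivative_iff_has_vector_derivative)
  qed
  have I: "((\<lambda>s. s powr \<alpha> * (s+b) powr (-\<alpha>-2)) has_integral (H b - H 0)) {0..b}"
    by (rule fundamental_theorem_of_calculus_interior[OF _ cont der]) (use b in auto)
  have t2: "2 powr (-\<alpha>-1) = 1/(2 powr \<alpha> * 2)"
  proof -
    have "-\<alpha>-1 = -(\<alpha>+1)" by simp
    hence "2 powr (-\<alpha>-1) = inverse (2 powr (\<alpha>+1))" by (simp only: powr_minus)
    thus ?thesis by (simp add: powr_add inverse_eq_divide)
  qed
  have "H b - H 0 = 2 powr (-\<alpha>-1)/((\<alpha>+1)*b)"
    using b al unfolding t2 by (simp add: H_def powr_minus_divide powr_divide powr_add)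
  with I have I': "((\<lambda>s. s powr \<alpha> * (s+b) powr (-\<alpha>-2)) has_integral 2 powr (-\<alpha>-1)/((\<alpha>+1)*b)) {0..b}" by simp
  show ?thesis
    by (rule nn_integral_has_integral_lebesgue'[OF _ I']) auto
qed



lemma Complex_meas: "(\<lambda>p. Complex (fst p) (snd p)) \<in> (lborel \<Otimes>\<^sub>M lborel :: (real \<times> real) measure) \<rightarrow>\<^sub>M borel"
  unfolding lborel_prod measurable_lborel2 by (intro borel_measurable_continuous_onI continuous_intros)

lemma nn_integral_complex:
  assumes h: "h \<in> borel_measurable borel"
  shows "(\<integral>\<^sup>+w. h w \<partial>lborel) = (\<integral>\<^sup>+s. (\<integral>\<^sup>+x. h (Complex x s) \<partial>lborel) \<partial>lborel)"
proof -
  have "(\<integral>\<^sup>+w. h w \<partial>lborel) = (\<integral>\<^sup>+p. h (Complex (fst p) (snd p)) \<partial>(lborel \<Otimes>\<^sub>M lborel))"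
    by (subst lborel_complex_distr) (simp add: nn_integral_distr[OF Complex_meas] h)
  also have "\<dots> = (\<integral>\<^sup>+s. (\<integral>\<^sup>+x. h (Complex x s) \<partial>lborel) \<partial>lborel)"
    by (rule lborel_pair.nn_integral_snd[symmetric, where f="\<lambda>p. h (Complex (fst p) (snd p))", simplified])
       (rule measurable_compose[OF Complex_meas h])
  finally show ?thesis .
qed

lemma H_borel[measurable]: "upper_half_plane \<in> sets borel"
proof -
  have "open upper_half_plane" unfolding upper_half_plane_def by (rule open_halfspace_Im_gt)
  thus ?thesis by simp
qed

lemma cmod_Complex_sq: "(cmod (Complex x s - cnj z))^2 = (x - Re z)^2 + (s + Im z)^2"
  by (simp add: cmod_power2)

lemma Num_bound:
  fixes z :: complex assumes b: "Im z > 0"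
  shows "(\<integral>\<^sup>+w. ennreal (1/(cmod (w - cnj z))^4) * indicator upper_half_plane w \<partial>lborel)
         \<le> ennreal (pi/(4*(Im z)^2))"
proof -
  have "(\<integral>\<^sup>+w. ennreal (1/(cmod (w - cnj z))^4) * indicator upper_half_plane w \<partial>lborel)
     = (\<integral>\<^sup>+s. (\<integral>\<^sup>+x. ennreal (1/(cmod (Complex x s - cnj z))^4) * indicator upper_half_plane (Complex x s) \<partial>lborel) \<partial>lborel)"
    by (rule nn_integral_complex) measurable
  also have "\<dots> \<le> (\<integral>\<^sup>+s. ennreal (pi/(2*(s + Im z)^3)) * indicator {0..} s \<partial>lborel)"
  proof (intro nn_integral_mono)
    fix s :: real
    show "(\<integral>\<^sup>+x. ennreal (1/(cmod (Complex x s - cnj z))^4) * indicator upper_half_plane (Complex x s) \<partial>lborel)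
          \<le> ennreal (pi/(2*(s + Im z)^3)) * indicator {0..} s"
    proof (cases "s > 0")
      case True
      have e: "1/(cmod (Complex x s - cnj z))^4 = 1/((x - Re z)^2 + (s + Im z)^2)^2" for x
      proof -
        have "(cmod (Complex x s - cnj z))^4 = ((cmod (Complex x s - cnj z))^2)^2" by simp
        thus ?thesis by (simp only: cmod_Complex_sq)
      qed
      have "(\<integral>\<^sup>+x. ennreal (1/(cmod (Complex x s - cnj z))^4) * indicator upper_half_plane (Complex x s) \<partial>lborel)
          = (\<integral>\<^sup>+x. ennreal (1/((x - Re z)^2 + (s + Im z)^2)^2) \<partial>lborel)"
        using True by (intro nn_integral_cong) (simp add: e upper_half_plane_def)
      also have "\<dots> \<le> ennreal (pi/(2*(s + Im z)^3))"
        by (rule L2) (use True b in simp)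
      finally show ?thesis using True by simp
    next
      case False
      thus ?thesis by (simp add: upper_half_plane_def)
    qed
  qed
  also have "\<dots> = ennreal (pi/(4*(Im z)^2))" by (rule L3[OF b])
  finally show ?thesis .
qed

lemma powr_aux1:
  fixes u \<alpha> :: real assumes u: "u > 0"
  shows "(5/4*u^2) powr (-(\<alpha>+2)) * u = (4/5) powr (\<alpha>+2) * (u powr (-\<alpha>-1) * u powr (-\<alpha>-2))"
proof -
  have 1: "(5/4*u^2) powr (-(\<alpha>+2)) = (5/4) powr (-(\<alpha>+2)) * (u^2) powr (-(\<alpha>+2))"
    by (rule powr_mult)
  have 2: "(5/4::real) powr (-(\<alpha>+2)) = (4/5) powr (\<alpha>+2)"
  proof -
    have "(5/4::real) powr (-(\<alpha>+2)) = inverse ((5/4) powr (\<alpha>+2))" by (rule powr_minus)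
    also have "\<dots> = (4/5) powr (\<alpha>+2)" by (simp add: powr_divide)
    finally show ?thesis .
  qed
  have 3: "(u^2) powr (-(\<alpha>+2)) = u powr (2*(-(\<alpha>+2)))"
  proof -
    have "u powr 2 = u^2" by (rule powr_numeral[OF less_imp_le[OF u]])
    hence "(u^2) powr (-(\<alpha>+2)) = (u powr 2) powr (-(\<alpha>+2))" by simp
    also have "\<dots> = u powr (2*(-(\<alpha>+2)))" by (rule powr_powr)
    finally show ?thesis .
  qed
  have 4: "u powr (2*(-(\<alpha>+2))) * u = u powr (-\<alpha>-1) * u powr (-\<alpha>-2)"
  proof -
    have p1: "u powr 1 = u" using u by simp
    have e: "2*(-(\<alpha>+2)) + 1 = (-\<alpha>-1) + (-\<alpha>-2)" by simp
    have "u powr ((-\<alpha>-1) + (-\<alpha>-2)) = u powr (-\<alpha>-1) * u powr (-\<alpha>-2)" by (rule powr_add)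
    moreover have "u powr (2*(-(\<alpha>+2)) + 1) = u powr (2*(-(\<alpha>+2))) * u powr 1" by (rule powr_add)
    ultimately have "u powr (2*(-(\<alpha>+2))) * u powr 1 = u powr (-\<alpha>-1) * u powr (-\<alpha>-2)" unfolding e by simp
    thus ?thesis unfolding p1 .
  qed
  show ?thesis unfolding 1 2 3 using 4 by (simp add: mult.assoc)
qed

lemma Den_bound:
  fixes z :: complex and \<alpha> :: real assumes b: "Im z > 0" and al: "\<alpha> > 0"
  shows "ennreal ((4/5) powr (\<alpha>+2) * (2 * Im z) powr (-\<alpha>-1) * (2 powr (-\<alpha>-1)/((\<alpha>+1)*Im z)))
    \<le> (\<integral>\<^sup>+w. ennreal (((cmod (w - cnj z))^2) powr (-(\<alpha>+2)) * Im w powr \<alpha>) * indicator upper_half_plane w \<partial>lborel)"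
proof -
  define a where "a = Re z"
  define bb where "bb = Im z"
  define K where "K = (4/5) powr (\<alpha>+2) * (2 * bb) powr (-\<alpha>-1)"
  have Kp: "K \<ge> 0" unfolding K_def by simp
  have "ennreal ((4/5) powr (\<alpha>+2) * (2 * Im z) powr (-\<alpha>-1) * (2 powr (-\<alpha>-1)/((\<alpha>+1)*Im z)))
      = ennreal K * ennreal (2 powr (-\<alpha>-1)/((\<alpha>+1)*bb))"
  proof -
    have "(4/5) powr (\<alpha>+2) * (2 * Im z) powr (-\<alpha>-1) * (2 powr (-\<alpha>-1)/((\<alpha>+1)*Im z))
        = K * (2 powr (-\<alpha>-1)/((\<alpha>+1)*bb))" unfolding K_def bb_def by simp
    moreover have "ennreal (K * (2 powr (-\<alpha>-1)/((\<alpha>+1)*bb))) = ennreal K * ennreal (2 powr (-\<alpha>-1)/((\<alpha>+1)*bb))"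
      by (rule ennreal_mult) (use Kp b al in \<open>auto simp: bb_def\<close>)
    ultimately show ?thesis by simp
  qed
  also have "\<dots> = ennreal K * (\<integral>\<^sup>+s. ennreal (s powr \<alpha> * (s+bb) powr (-\<alpha>-2)) * indicator {0..bb} s \<partial>lborel)"
    using L4[of bb \<alpha>] b al unfolding bb_def by simp
  also have "\<dots> = (\<integral>\<^sup>+s. ennreal K * (ennreal (s powr \<alpha> * (s+bb) powr (-\<alpha>-2)) * indicator {0..bb} s) \<partial>lborel)"
    by (rule nn_integral_cmult[symmetric]) measurable
  also have "\<dots> \<le> (\<integral>\<^sup>+s. (\<integral>\<^sup>+x. ennreal (((cmod (Complex x s - cnj z))^2) powr (-(\<alpha>+2)) * Im (Complex x s) powr \<alpha>) * indicator upper_half_plane (Complex x s) \<partial>lborel) \<partial>lborel)"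
  proof (intro nn_integral_mono)
    fix s :: real
    show "ennreal K * (ennreal (s powr \<alpha> * (s+bb) powr (-\<alpha>-2)) * indicator {0..bb} s)
      \<le> (\<integral>\<^sup>+x. ennreal (((cmod (Complex x s - cnj z))^2) powr (-(\<alpha>+2)) * Im (Complex x s) powr \<alpha>) * indicator upper_half_plane (Complex x s) \<partial>lborel)"
    proof (cases "0 < s \<and> s \<le> bb")
      case False
      hence "s \<le> 0 \<or> s > bb" by auto
      thus ?thesis
      proof
        assume "s \<le> 0"
        hence "s powr \<alpha> = 0 \<or> s \<notin> {0..bb}" by auto
        thus ?thesis by auto
      next
        assume "s > bb" thus ?thesis by simp
      qed
    next
      case True
      have sp: "s > 0" "s \<le> bb" "s + bb > 0" using True b unfolding bb_def by auto
      define C where "C = (5/4*(s+bb)^2) powr (-(\<alpha>+2)) * s powr \<alpha>"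
      have "ennreal K * (ennreal (s powr \<alpha> * (s+bb) powr (-\<alpha>-2)) * indicator {0..bb} s)
          = ennreal (K * (s powr \<alpha> * (s+bb) powr (-\<alpha>-2)))"
        using True Kp by (simp add: ennreal_mult)
      also have "\<dots> \<le> ennreal (C * (s + bb))"
      proof (rule ennreal_leI)
        have e: "C * (s+bb) = (4/5) powr (\<alpha>+2) * ((s+bb) powr (-\<alpha>-1) * (s+bb) powr (-\<alpha>-2)) * s powr \<alpha>"
          unfolding C_def using powr_aux1[OF sp(3), of \<alpha>] by (simp add: ac_simps)
        have m: "(2*bb) powr (-\<alpha>-1) \<le> (s+bb) powr (-\<alpha>-1)"
          by (rule powr_mono2') (use sp al in auto)
        have "K * (s powr \<alpha> * (s+bb) powr (-\<alpha>-2))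
            = (4/5) powr (\<alpha>+2) * ((2*bb) powr (-\<alpha>-1) * (s+bb) powr (-\<alpha>-2)) * s powr \<alpha>"
          unfolding K_def by (simp add: ac_simps)
        also have "\<dots> \<le> (4/5) powr (\<alpha>+2) * ((s+bb) powr (-\<alpha>-1) * (s+bb) powr (-\<alpha>-2)) * s powr \<alpha>"
          by (intro mult_right_mono mult_left_mono m) auto
        finally show "K * (s powr \<alpha> * (s+bb) powr (-\<alpha>-2)) \<le> C * (s + bb)" unfolding e .
      qed
      also have "\<dots> = (\<integral>\<^sup>+x. ennreal C * indicator {a - (s+bb)/2 .. a + (s+bb)/2} x \<partial>lborel)"
      proof -
        have em: "emeasure lborel {a - (s+bb)/2 .. a + (s+bb)/2} = ennreal (s + bb)"
        proof -
          have h0: "(s+bb)/2 \<ge> 0" using sp(3) by simp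
          have le: "a - (s+bb)/2 \<le> a + (s+bb)/2" using h0 by linarith
          have d: "a + (s+bb)/2 - (a - (s+bb)/2) = s + bb" by simp
          show ?thesis using emeasure_lborel_Icc[OF le] unfolding d .
        qed
        have Cp: "C \<ge> 0" unfolding C_def by simp
        have i: "(\<integral>\<^sup>+x. ennreal C * indicator {a - (s+bb)/2 .. a + (s+bb)/2} x \<partial>lborel) = ennreal C * ennreal (s + bb)"
          by (subst nn_integral_cmult_indicator) (auto simp only: em sets_lborel atLeastAtMost_borel)
        have "ennreal (C * (s + bb)) = ennreal C * ennreal (s + bb)"
          by (rule ennreal_mult) (use Cp sp in auto)
        thus ?thesis using i by simp
      qed
      also have "\<dots> \<le> (\<integral>\<^sup>+x. ennreal (((cmod (Complex x s - cnj z))^2) powr (-(\<alpha>+2)) * Im (Complex x s) powr \<alpha>) * indicator upper_half_plane (Complex x s) \<partial>lborel)"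
      proof (intro nn_integral_mono)
        fix x :: real
        show "ennreal C * indicator {a - (s+bb)/2 .. a + (s+bb)/2} x
          \<le> ennreal (((cmod (Complex x s - cnj z))^2) powr (-(\<alpha>+2)) * Im (Complex x s) powr \<alpha>) * indicator upper_half_plane (Complex x s)"
        proof (cases "x \<in> {a - (s+bb)/2 .. a + (s+bb)/2}")
          case False thus ?thesis by simp
        next
          case True
          have q: "(cmod (Complex x s - cnj z))^2 = (x - a)^2 + (s + bb)^2"
            unfolding a_def bb_def by (rule cmod_Complex_sq)
          have xa: "(x - a)^2 \<le> ((s+bb)/2)^2"
          proof -
            have t1: "a - (s+bb)/2 \<le> x" "x \<le> a + (s+bb)/2" using True by auto
            have "\<bar>x - a\<bar> \<le> (s+bb)/2" unfolding abs_le_iff using t1 by linarith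
            hence "\<bar>x - a\<bar>^2 \<le> ((s+bb)/2)^2" by (intro power_mono) auto
            thus ?thesis by simp
          qed
          have le: "(x - a)^2 + (s + bb)^2 \<le> 5/4*(s+bb)^2"
            using xa by (simp add: power_divide)
          have pos: "0 < (x - a)^2 + (s + bb)^2" using sp by (simp add: add_nonneg_pos)
          have "(5/4*(s+bb)^2) powr (-(\<alpha>+2)) \<le> ((x - a)^2 + (s + bb)^2) powr (-(\<alpha>+2))"
            by (rule powr_mono2') (use le pos al in auto)
          hence "C \<le> ((cmod (Complex x s - cnj z))^2) powr (-(\<alpha>+2)) * Im (Complex x s) powr \<alpha>"
            unfolding C_def q complex.sel by (intro mult_right_mono) auto
          thus ?thesis using True sp by (simp add: upper_half_plane_def ennreal_leI)
        qed
      qed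
      finally show ?thesis .
    qed
  qed
  also have "\<dots> = (\<integral>\<^sup>+w. ennreal (((cmod (w - cnj z))^2) powr (-(\<alpha>+2)) * Im w powr \<alpha>) * indicator upper_half_plane w \<partial>lborel)"
    by (rule nn_integral_complex[symmetric]) measurable
  finally show ?thesis .
qed



lemma ln_85: "ln (8/5::real) \<ge> 5/12"
proof -
  have l: "ln x \<ge> 1 - 1/x" if "x > 0" for x :: real
  proof -
    have "ln (1/x) \<le> 1/x - 1" using that by (intro ln_le_minus_one) simp
    thus ?thesis using that by (simp add: ln_div)
  qed
  have "ln (8/5::real) = ln (4/3) + ln (6/5)" using ln_mult[of "4/3::real" "6/5"] by simp
  also have "\<dots> \<ge> (1 - 1/(4/3)) + (1 - 1/(6/5))" by (intro add_mono l) auto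
  finally show ?thesis by simp
qed

lemma pow85: fixes \<alpha> :: real assumes "\<alpha> > 0" shows "(\<alpha>+1) * 25/64 \<le> (8/5) powr \<alpha>"
proof -
  have "(8/5::real) powr \<alpha> = exp (\<alpha> * ln (8/5))" by (simp add: powr_def)
  also have "\<dots> \<ge> 1 + \<alpha> * ln (8/5)" by (rule exp_ge_add_one_self)
  finally have "(8/5::real) powr \<alpha> \<ge> 1 + \<alpha> * ln (8/5)" .
  moreover have "\<alpha> * ln (8/5) \<ge> \<alpha> * (5/12)" using ln_85 assms by (intro mult_left_mono) auto
  moreover have "(\<alpha>+1) * 25/64 = 25/64*\<alpha> + 25/64" by simp
  ultimately show ?thesis using assms by linarith
qed

lemma final_arith:
  fixes \<alpha> A B R b ng :: real
  assumes al: "\<alpha> > 0" and A: "A > 0" and B: "B > 0" and R: "0 < R" "R < 1" and b: "b > 0"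
    and ng: "ng \<ge> (4/5) powr (\<alpha>+2) * (2 * b) powr (-\<alpha>-1) * (2 powr (-\<alpha>-1)/((\<alpha>+1)*b))"
    and H: "(1 - R^2) powr (-\<alpha>) * (A/B) * ng \<le> (4*b) powr (-\<alpha>) * (pi/(4*b^2))"
  shows "R \<le> 1 - ((1 / (4 powr (\<alpha> + 1) * pi)) * (A / B)) powr (1 / \<alpha>)"
proof -
  define X where "X = A/B"
  have Xp: "X > 0" using A B by (simp add: X_def)
  define D0 where "D0 = (4/5) powr (\<alpha>+2) * (2 * b) powr (-\<alpha>-1) * (2 powr (-\<alpha>-1)/((\<alpha>+1)*b))"
  have D0p: "D0 > 0" unfolding D0_def using al b by simp
  define T where "T = 1 - R^2"
  have Tp: "T > 0" using R by (simp add: T_def power_less_one_iff abs_square_less_1)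
  have key: "D0 * (pi * (\<alpha>+1) * (5/4) powr (\<alpha>+2)) = (4*b) powr (-\<alpha>) * (pi/(4*b^2))"
  proof -
    have 1: "(4/5::real) powr (\<alpha>+2) * (5/4) powr (\<alpha>+2) = 1"
      by (simp add: powr_mult[symmetric])
    have 2: "(2 * b) powr (-\<alpha>-1) * 2 powr (-\<alpha>-1) = (4*b) powr (-\<alpha>-1)"
      by (simp add: powr_mult[symmetric] mult.commute mult.left_commute)
    have 3: "(4*b) powr (-\<alpha>) = (4*b) powr (-\<alpha>-1) * (4*b)"
    proof -
      have "(4*b) powr (-\<alpha>) = (4*b) powr ((-\<alpha>-1) + 1)" by simp
      also have "\<dots> = (4*b) powr (-\<alpha>-1) * (4*b) powr 1" by (rule powr_add)
      finally show ?thesis using b by simp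
    qed
    have "D0 * (pi * (\<alpha>+1) * (5/4) powr (\<alpha>+2))
        = ((4/5::real) powr (\<alpha>+2) * (5/4) powr (\<alpha>+2)) * ((2 * b) powr (-\<alpha>-1) * 2 powr (-\<alpha>-1)) * pi * (\<alpha>+1) / ((\<alpha>+1)*b)"
      unfolding D0_def by (simp add: field_simps)
    also have "\<dots> = (4*b) powr (-\<alpha>-1) * pi / b"
    proof -
      have p: "(\<alpha>+1)*b > 0" using al b by simp
      have q: "(\<alpha>+1)*b = b + \<alpha>*b" by (simp add: algebra_simps)
      have nz: "(\<alpha>+1)*b \<noteq> 0" "b + \<alpha>*b \<noteq> 0" using p q by linarith+
      show ?thesis unfolding 1 2 using nz b by (simp add: field_simps)
    qed
    also have "\<dots> = (4*b) powr (-\<alpha>) * (pi/(4*b^2))"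
      unfolding 3 using b by (simp add: field_simps power2_eq_square)
    finally show ?thesis .
  qed
  have "T powr (-\<alpha>) * X * D0 \<le> T powr (-\<alpha>) * X * ng"
    using ng Xp Tp by (intro mult_left_mono) (auto simp: D0_def)
  also have "\<dots> \<le> D0 * (pi * (\<alpha>+1) * (5/4) powr (\<alpha>+2))"
    using H unfolding key T_def X_def .
  finally have "T powr (-\<alpha>) * X \<le> pi * (\<alpha>+1) * (5/4) powr (\<alpha>+2)"
    using D0p by (simp add: mult.commute)
  hence X1: "X \<le> T powr \<alpha> * (pi * (\<alpha>+1) * (5/4) powr (\<alpha>+2))"
    using Tp by (simp add: powr_minus field_simps)
  have T2: "T powr \<alpha> \<le> (2*(1-R)) powr \<alpha>"
  proof -
    have h1: "R*R \<le> 1" using R by (intro mult_le_one) auto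
    have h0: "0 \<le> (R-1)*(R-1)" by simp
    have h3: "(R-1)*(R-1) = R*R - 2*R + 1" by (simp add: algebra_simps)
    have h2: "R*2 \<le> 1 + R*R" using h0 h3 by linarith
    show ?thesis using R al h1 h2 unfolding T_def by (intro powr_mono2) (auto simp: power2_eq_square algebra_simps)
  qed
  have X2: "X \<le> (2*(1-R)) powr \<alpha> * (pi * (\<alpha>+1) * (5/4) powr (\<alpha>+2))"
  proof -
    have "0 \<le> pi * (\<alpha>+1) * (5/4::real) powr (\<alpha>+2)" using al by simp
    hence "T powr \<alpha> * (pi * (\<alpha>+1) * (5/4) powr (\<alpha>+2)) \<le> (2*(1-R)) powr \<alpha> * (pi * (\<alpha>+1) * (5/4) powr (\<alpha>+2))"
      using T2 by (rule mult_right_mono[rotated])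
    thus ?thesis using X1 by linarith
  qed
  have "(2*(1-R)) powr \<alpha> * (pi * (\<alpha>+1) * (5/4) powr (\<alpha>+2))
      = (1-R) powr \<alpha> * pi * ((\<alpha>+1) * 25/64) * 4 * (5/2) powr \<alpha>"
  proof -
    have f1: "(5/4::real) powr (\<alpha>+2) = (5/4) powr \<alpha> * (5/4)^2"
      by (simp add: powr_add)
    have f2: "(2*(1-R)) powr \<alpha> = 2 powr \<alpha> * (1-R) powr \<alpha>" by (rule powr_mult)
    have f3: "(2::real) powr \<alpha> * (5/4) powr \<alpha> = (5/2) powr \<alpha>" by (simp add: powr_mult[symmetric])
    show ?thesis unfolding f1 f2 f3[symmetric] by (simp add: algebra_simps power2_eq_square)
  qed
  also have "\<dots> \<le> (1-R) powr \<alpha> * pi * (8/5) powr \<alpha> * 4 * (5/2) powr \<alpha>"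
    using pow85[OF al] R by (intro mult_right_mono mult_left_mono) auto
  also have "\<dots> = (1-R) powr \<alpha> * (4 powr (\<alpha>+1) * pi)"
  proof -
    have "(8/5::real) powr \<alpha> * (5/2) powr \<alpha> = 4 powr \<alpha>" by (simp add: powr_mult[symmetric])
    moreover have "(4::real) powr (\<alpha>+1) = 4 powr \<alpha> * 4" by (simp add: powr_add)
    ultimately show ?thesis by (simp add: field_simps)
  qed
  finally have "X \<le> (1-R) powr \<alpha> * (4 powr (\<alpha>+1) * pi)" using X2 by linarith
  hence Y: "(1 / (4 powr (\<alpha> + 1) * pi)) * X \<le> (1-R) powr \<alpha>"
    by (simp add: field_simps)
  have "((1 / (4 powr (\<alpha> + 1) * pi)) * X) powr (1/\<alpha>) \<le> ((1-R) powr \<alpha>) powr (1/\<alpha>)"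
    using Y Xp al by (intro powr_mono2) auto
  also have "\<dots> = 1 - R" using R al by (simp add: powr_powr)
  finally show ?thesis unfolding X_def by linarith
qed



lemma pw_basic:
  fixes z w :: complex assumes b: "Im z > 0" and s: "Im w > 0"
  shows "w - cnj z \<noteq> 0"
    and "(cmod (w - cnj z))^2 = (Re w - Re z)^2 + (Im w + Im z)^2"
    and "cmod (w - cnj z) \<ge> Im w + Im z"
    and "(cmod (w - z))^2 = (cmod (w - cnj z))^2 - 4 * Im w * Im z"
    and "pseudohyp z w = cmod ((w - z)/(w - cnj z))"
proof -
  show 1: "(cmod (w - cnj z))^2 = (Re w - Re z)^2 + (Im w + Im z)^2"
    by (simp add: cmod_power2)
  have "Im (w - cnj z) = Im w + Im z" by simp
  hence "\<bar>Im w + Im z\<bar> \<le> cmod (w - cnj z)" using abs_Im_le_cmod by metis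
  thus "cmod (w - cnj z) \<ge> Im w + Im z" by linarith
  thus "w - cnj z \<noteq> 0" using b s by auto
  show "(cmod (w - z))^2 = (cmod (w - cnj z))^2 - 4 * Im w * Im z"
    by (simp only: 1 cmod_power2) (simp add: power2_eq_square algebra_simps)
  have "cmod (z - cnj w) = cmod (w - cnj z)"
  proof -
    have "cmod (z - cnj w) = cmod (cnj (z - cnj w))" by (rule complex_mod_cnj[symmetric])
    also have "cnj (z - cnj w) = - (w - cnj z)" by simp
    finally show ?thesis by (simp only: norm_minus_cancel)
  qed
  moreover have "cmod (z - w) = cmod (w - z)" by (rule norm_minus_commute)
  ultimately show "pseudohyp z w = cmod ((w - z)/(w - cnj z))"
    unfolding pseudohyp_def by (simp add: norm_divide)
qed

lemma phi_sq:
  fixes z w :: complex assumes b: "Im z > 0" and s: "Im w > 0"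
  shows "(cmod ((w - z)/(w - cnj z)))^2 = 1 - 4 * Im w * Im z / (cmod (w - cnj z))^2"
proof -
  have q: "(cmod (w - cnj z))^2 > 0" using pw_basic(1)[OF b s] by simp
  show ?thesis using q unfolding norm_divide power_divide pw_basic(4)[OF b s]
    by (simp add: field_simps)
qed

lemma G_sq:
  fixes u :: complex and r :: real assumes u: "u \<noteq> 0"
  shows "(cmod (u powr complex_of_real r))^2 = ((cmod u)^2) powr r"
proof -
  have "cmod (u powr complex_of_real r) = cmod u powr r"
    by (subst norm_powr_real_powr') auto
  thus ?thesis by (simp add: power2_eq_square powr_mult)
qed

definition cc :: "real \<Rightarrow> nat \<Rightarrow> real" where
  "cc \<alpha> n = ((real n + \<alpha> - 1) gchoose n)"

lemma cc_nonneg: assumes "\<alpha> > 0" shows "cc \<alpha> n \<ge> 0"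
  unfolding cc_def gbinomial_prod_rev using assms
  by (intro divide_nonneg_pos prod_nonneg) auto

lemma cc_sums:
  fixes t \<alpha> :: real assumes t: "0 \<le> t" "t < 1"
  shows "(\<lambda>n. cc \<alpha> n * t^n) sums (1 - t) powr (-\<alpha>)"
proof -
  have "(\<lambda>n. ((-\<alpha>) gchoose n) * (-t)^n) sums (1 + -t) powr (-\<alpha>)"
    by (rule gen_binomial_real) (use t in auto)
  moreover have "((-\<alpha>) gchoose n) * (-t)^n = cc \<alpha> n * t^n" for n
  proof -
    define G' where "G' = ((real n + \<alpha> - 1) gchoose n)"
    have "((-\<alpha>) gchoose n) = (-1)^n * ((real n - (-\<alpha>) - 1) gchoose n)"
      by (rule gbinomial_negated_upper)
    moreover have "(real n - (-\<alpha>) - 1) = real n + \<alpha> - 1" by simp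
    ultimately have h1: "((-\<alpha>) gchoose n) = (-1)^n * G'" unfolding G'_def by simp
    have h2: "(-t)^n = (-1)^n * t^n" by (rule power_minus)
    have e: "(-1::real)^n * (-1)^n = 1" by (induct n) auto
    have "((-\<alpha>) gchoose n) * (-t)^n = ((-1)^n * (-1)^n) * (G' * t^n)"
      unfolding h1 h2 by (simp only: mult.assoc) (simp only: mult.left_commute[of "G'"])
    also have "\<dots> = G' * t^n" unfolding e by simp
    finally show ?thesis unfolding cc_def G'_def .
  qed
  ultimately show ?thesis by simp
qed

lemma sum_pw:
  fixes s b Q \<alpha> :: real assumes s: "s > 0" and b: "b > 0" and Q: "Q > 0"
  shows "(4* s*b/Q) powr (-\<alpha>) * (Q powr (-(\<alpha>+2)) * s powr \<alpha>) = (4*b) powr (-\<alpha>) * (1/Q^2)"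
proof -
  have 1: "(4* s*b/Q) powr (-\<alpha>) = (4*b) powr (-\<alpha>) * s powr (-\<alpha>) * Q powr \<alpha>"
  proof -
    have e0: "4* s*b/Q = ((4*b)* s)/Q" by simp
    have "((4*b)* s/Q) powr (-\<alpha>) = ((4*b)* s) powr (-\<alpha>) / Q powr (-\<alpha>)"
      using s b Q by (intro powr_divide)
    also have "((4*b)* s) powr (-\<alpha>) = (4*b) powr (-\<alpha>) * s powr (-\<alpha>)" by (rule powr_mult)
    also have "Q powr (-\<alpha>) = inverse (Q powr \<alpha>)" by (rule powr_minus)
    finally have "((4*b)* s/Q) powr (-\<alpha>) = (4*b) powr (-\<alpha>) * s powr (-\<alpha>) / inverse (Q powr \<alpha>)" .
    thus ?thesis unfolding e0 by (simp add: divide_inverse)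
  qed
  have 2: "s powr (-\<alpha>) * s powr \<alpha> = 1" using s by (simp add: powr_add[symmetric])
  have 3: "Q powr \<alpha> * Q powr (-(\<alpha>+2)) = 1/Q^2"
  proof -
    have "Q powr \<alpha> * Q powr (-(\<alpha>+2)) = Q powr (\<alpha> + (-(\<alpha>+2)))" by (rule powr_add[symmetric])
    also have "\<alpha> + (-(\<alpha>+2)) = - 2" by simp
    also have "Q powr (-2) = inverse (Q powr 2)" by (rule powr_minus)
    also have "Q powr 2 = Q^2" using Q by (simp add: powr_numeral)
    finally show ?thesis by (simp add: inverse_eq_divide)
  qed
  have "(4* s*b/Q) powr (-\<alpha>) * (Q powr (-(\<alpha>+2)) * s powr \<alpha>)
      = (4*b) powr (-\<alpha>) * (s powr (-\<alpha>) * s powr \<alpha>) * (Q powr \<alpha> * Q powr (-(\<alpha>+2)))"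
    unfolding 1 by (simp add: ac_simps)
  also have "\<dots> = (4*b) powr (-\<alpha>) * (1/Q^2)" unfolding 2 3 by simp
  finally show ?thesis .
qed

lemma fin_pw:
  fixes s b m \<alpha> :: real assumes s: "s > 0" and b: "b > 0" and m: "m \<ge> s + b" and al: "\<alpha> > 0"
  shows "(m^2) powr (-(\<alpha>+2)) * s powr \<alpha> \<le> b powr (-\<alpha>) * (1/m^4)"
proof -
  have mp: "m > 0" using s b m by linarith
  have e1: "(m^2) powr (-(\<alpha>+2)) = m powr (-\<alpha>) * m powr (-\<alpha>) * m powr (-4)"
  proof -
    have "m powr 2 = m^2" using mp by (simp add: powr_numeral)
    hence "(m^2) powr (-(\<alpha>+2)) = (m powr 2) powr (-(\<alpha>+2))" by simp
    also have "\<dots> = m powr (2 * (-(\<alpha>+2)))" by (rule powr_powr)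
    also have "2 * (-(\<alpha>+2)) = (-\<alpha>) + (-\<alpha>) + (-4)" by simp
    also have "m powr ((-\<alpha>) + (-\<alpha>) + (-4)) = m powr ((-\<alpha>) + (-\<alpha>)) * m powr (-4)" by (rule powr_add)
    also have "m powr ((-\<alpha>) + (-\<alpha>)) = m powr (-\<alpha>) * m powr (-\<alpha>)" by (rule powr_add)
    finally show ?thesis .
  qed
  have e4: "m powr (-4) = 1/m^4"
  proof -
    have "m powr (-4) = inverse (m powr 4)" by (rule powr_minus)
    also have "m powr 4 = m^4" using mp by (simp add: powr_numeral)
    finally show ?thesis by (simp add: inverse_eq_divide)
  qed
  have sm: "s powr \<alpha> \<le> m powr \<alpha>" using s m b al by (intro powr_mono2) auto
  have mb: "m powr (-\<alpha>) \<le> b powr (-\<alpha>)" using b m s al by (intro powr_mono2') auto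
  have c1: "m powr (-\<alpha>) * m powr \<alpha> = 1" using mp by (simp add: powr_add[symmetric])
  have "(m^2) powr (-(\<alpha>+2)) * s powr \<alpha> \<le> (m^2) powr (-(\<alpha>+2)) * m powr \<alpha>"
    using sm by (intro mult_left_mono) auto
  also have "\<dots> = m powr (-\<alpha>) * (m powr (-\<alpha>) * m powr \<alpha>) * m powr (-4)"
    unfolding e1 by (simp add: ac_simps)
  also have "\<dots> = m powr (-\<alpha>) * m powr (-4)" unfolding c1 by simp
  also have "\<dots> \<le> b powr (-\<alpha>) * m powr (-4)" using mb by (intro mult_right_mono) auto
  finally show ?thesis unfolding e4 .
qed

lemma meas_g:
  fixes F :: "complex \<Rightarrow> complex"
  assumes "continuous_on upper_half_plane F"
  shows "(\<lambda>w. ennreal ((cmod (F w))^2 * Im w powr \<alpha>) * indicator upper_half_plane w) \<in> borel_measurable borel"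
proof -
  have c: "continuous_on upper_half_plane (\<lambda>w. (cmod (F w))^2 * Im w powr \<alpha>)"
    using assms by (intro continuous_intros) (auto simp: upper_half_plane_def)
  have "(\<lambda>w. indicator upper_half_plane w *\<^sub>R ((cmod (F w))^2 * Im w powr \<alpha>)) \<in> borel_measurable borel"
    by (rule borel_measurable_continuous_on_indicator[OF H_borel c])
  hence "(\<lambda>w. ennreal (indicator upper_half_plane w *\<^sub>R ((cmod (F w))^2 * Im w powr \<alpha>))) \<in> borel_measurable borel"
    by measurable
  moreover have "(\<lambda>w. ennreal ((cmod (F w))^2 * Im w powr \<alpha>) * indicator upper_half_plane w)
      = (\<lambda>w. ennreal (indicator upper_half_plane w *\<^sub>R ((cmod (F w))^2 * Im w powr \<alpha>)))"
    by (auto simp: indicator_def fun_eq_iff)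
  ultimately show ?thesis by simp
qed



lemma sq_pow_aux: "((x::real)^n * y)^2 = (x^2)^n * y^2"
  by (simp add: power_mult_distrib power_mult[symmetric] mult.commute)

theorem corollary1:
  fixes \<alpha> A B R :: real and \<mu> :: "complex measure" and z :: complex
  assumes "\<alpha> > 0"
    and "sets \<mu> = sets borel"
    and "A > 0" and "B > 0"
    and "\<forall>F \<in> bergman_space \<alpha>.
           ennreal A * bergman_norm2 \<alpha> F \<le> weighted_mu_integral \<mu> \<alpha> F \<and>
           weighted_mu_integral \<mu> \<alpha> F \<le> ennreal B * bergman_norm2 \<alpha> F"
    and "0 < R" and "R < 1"
    and "z \<in> upper_half_plane"
    and "emeasure \<mu> (pdisc R z) = 0"
  shows "R \<le> 1 - ((1 / (4 powr (\<alpha> + 1) * pi)) * (A / B)) powr (1 / \<alpha>)"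
proof -
  note al = assms(1) and sets_mu = assms(2) and Ap = assms(3) and Bp = assms(4)
    and samp = assms(5) and R0 = assms(6) and R1 = assms(7) and zH = assms(8) and hole = assms(9)
  define H where "H = upper_half_plane"
  define b where "b = Im z"
  have b: "b > 0" using zH by (simp add: b_def upper_half_plane_def)
  define G where "G w = (w - cnj z) powr complex_of_real (-(\<alpha>+2))" for w
  define phi where "phi w = (w - z)/(w - cnj z)" for w
  define Fn where "Fn n w = phi w ^ n * G w" for n w
  define g where "g F w = ennreal ((cmod (F w))^2 * Im w powr \<alpha>) * indicator H w" for F w
  define Qf where "Qf w = (cmod (w - cnj z))^2" for w
  have inH: "w \<in> H \<longleftrightarrow> Im w > 0" for w by (simp add: H_def upper_half_plane_def)
  have norm_eq: "bergman_norm2 \<alpha> F = (\<integral>\<^sup>+w. g F w \<partial>lborel)" for F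
    by (simp add: bergman_norm2_def g_def H_def)
  have wmu_eq: "weighted_mu_integral \<mu> \<alpha> F = (\<integral>\<^sup>+w. g F w \<partial>\<mu>)" for F
    by (simp add: weighted_mu_integral_def g_def H_def)
  have nz: "w - cnj z \<noteq> 0" if "w \<in> H" for w
    using pw_basic(1)[of z w] b that by (simp add: b_def inH)
  have Qp: "Qf w > 0" if "w \<in> H" for w using nz[OF that] by (simp add: Qf_def)
  have holG: "G holomorphic_on H"
    unfolding G_def
  proof (intro holomorphic_on_powr holomorphic_intros)
    fix w assume "w \<in> H"
    hence "Im (w - cnj z) > 0" using b by (simp add: inH b_def)
    thus "w - cnj z \<notin> \<real>\<^sub>\<le>\<^sub>0" by (auto simp: complex_nonpos_Reals_iff)
  qed
  have holphi: "phi holomorphic_on H"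
    unfolding phi_def using nz by (intro holomorphic_intros) auto
  have holF: "Fn n holomorphic_on H" for n
    unfolding Fn_def using holG holphi by (intro holomorphic_intros) auto
  have contG: "continuous_on H G" by (rule holomorphic_on_imp_continuous_on[OF holG])
  have contF: "continuous_on H (Fn n)" for n by (rule holomorphic_on_imp_continuous_on[OF holF])
  have measG: "g G \<in> borel_measurable borel"
    unfolding g_def H_def by (rule meas_g[OF contG[unfolded H_def]])
  have measF: "g (Fn n) \<in> borel_measurable borel" for n
    unfolding g_def H_def by (rule meas_g[OF contF[unfolded H_def]])
  have Gsq: "(cmod (G w))^2 = (Qf w) powr (-(\<alpha>+2))" if "w \<in> H" for w
    unfolding G_def Qf_def by (rule G_sq[OF nz[OF that]])
  have phisq: "(cmod (phi w))^2 = 1 - 4 * Im w * b / Qf w" if "w \<in> H" for w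
    unfolding phi_def Qf_def b_def using phi_sq[of z w] b that by (simp add: b_def inH)
  have t0: "(cmod (phi w))^2 \<ge> 0" for w by simp
  have t1: "(cmod (phi w))^2 < 1" if "w \<in> H" for w
  proof -
    have "4 * Im w * b / Qf w > 0" using that b Qp[OF that] by (simp add: inH)
    thus ?thesis using phisq[OF that] by linarith
  qed
  have Fsq: "(cmod (Fn n w))^2 = ((cmod (phi w))^2)^n * (cmod (G w))^2" for n w
    unfolding Fn_def by (simp add: norm_mult norm_power sq_pow_aux)
  have NG_le: "(\<integral>\<^sup>+w. g G w \<partial>lborel) \<le> ennreal (b powr (-\<alpha>) * (pi/(4*b^2)))"
  proof -
    have "(\<integral>\<^sup>+w. g G w \<partial>lborel) \<le> (\<integral>\<^sup>+w. ennreal (b powr (-\<alpha>)) * (ennreal (1/(cmod (w - cnj z))^4) * indicator upper_half_plane w) \<partial>lborel)"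
    proof (intro nn_integral_mono)
      fix w :: complex
      show "g G w \<le> ennreal (b powr (-\<alpha>)) * (ennreal (1/(cmod (w - cnj z))^4) * indicator upper_half_plane w)"
      proof (cases "w \<in> H")
        case False thus ?thesis by (simp add: g_def H_def)
      next
        case True
        have m: "cmod (w - cnj z) \<ge> Im w + b" using pw_basic(3)[of z w] b True by (simp add: b_def inH)
        have "(cmod (G w))^2 * Im w powr \<alpha> = ((cmod (w - cnj z))^2) powr (-(\<alpha>+2)) * Im w powr \<alpha>"
          using Gsq[OF True] by (simp add: Qf_def)
        also have "\<dots> \<le> b powr (-\<alpha>) * (1/(cmod (w - cnj z))^4)"
          by (rule fin_pw) (use True b m al in \<open>auto simp: inH\<close>)
        finally have le: "(cmod (G w))^2 * Im w powr \<alpha> \<le> b powr (-\<alpha>) * (1/(cmod (w - cnj z))^4)" .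
        have "g G w = ennreal ((cmod (G w))^2 * Im w powr \<alpha>)" using True by (simp add: g_def)
        also have "\<dots> \<le> ennreal (b powr (-\<alpha>) * (1/(cmod (w - cnj z))^4))" by (rule ennreal_leI[OF le])
        also have "\<dots> = ennreal (b powr (-\<alpha>)) * (ennreal (1/(cmod (w - cnj z))^4) * indicator upper_half_plane w)"
          using True by (simp add: ennreal_mult[symmetric] H_def)
        finally show ?thesis .
      qed
    qed
    also have "\<dots> = ennreal (b powr (-\<alpha>)) * (\<integral>\<^sup>+w. ennreal (1/(cmod (w - cnj z))^4) * indicator upper_half_plane w \<partial>lborel)"
      by (rule nn_integral_cmult) measurable
    also have "\<dots> \<le> ennreal (b powr (-\<alpha>)) * ennreal (pi/(4*b^2))"
      using Num_bound[of z] b unfolding b_def by (intro mult_left_mono) auto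
    also have "\<dots> = ennreal (b powr (-\<alpha>) * (pi/(4*b^2)))"
      by (rule ennreal_mult[symmetric]) (use b in auto)
    finally show ?thesis .
  qed
  have NF_le: "(\<integral>\<^sup>+w. g (Fn n) w \<partial>lborel) \<le> (\<integral>\<^sup>+w. g G w \<partial>lborel)" for n
  proof (intro nn_integral_mono)
    fix w :: complex
    show "g (Fn n) w \<le> g G w"
    proof (cases "w \<in> H")
      case False thus ?thesis by (simp add: g_def)
    next
      case True
      have le1: "(cmod (phi w))^2 \<le> 1" using t1[OF True] by linarith
      have "((cmod (phi w))^2)^n \<le> 1" by (rule power_le_one[OF t0 le1])
      hence "(cmod (Fn n w))^2 \<le> (cmod (G w))^2" unfolding Fsq
        by (intro mult_left_le_one_le) auto
      hence "(cmod (Fn n w))^2 * Im w powr \<alpha> \<le> (cmod (G w))^2 * Im w powr \<alpha>"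
        by (intro mult_right_mono) auto
      thus ?thesis using True by (simp add: g_def ennreal_leI)
    qed
  qed
  have NG_fin: "(\<integral>\<^sup>+w. g G w \<partial>lborel) < \<infinity>"
    using NG_le by (rule le_less_trans) simp
  have NF_fin: "(\<integral>\<^sup>+w. g (Fn n) w \<partial>lborel) < \<infinity>" for n
    using NF_le[of n] NG_fin by (rule le_less_trans)
  have G_in: "G \<in> bergman_space \<alpha>"
    unfolding bergman_space_def using holG NG_fin by (simp add: norm_eq H_def)
  have F_in: "Fn n \<in> bergman_space \<alpha>" for n
    unfolding bergman_space_def using holF NF_fin by (simp add: norm_eq H_def)
  obtain ng where ng: "(\<integral>\<^sup>+w. g G w \<partial>lborel) = ennreal ng" "ng \<ge> 0"
    using NG_fin by (cases "(\<integral>\<^sup>+w. g G w \<partial>lborel)") auto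
  have nfex: "\<exists>r. r \<ge> 0 \<and> (\<integral>\<^sup>+w. g (Fn n) w \<partial>lborel) = ennreal r" for n
    using NF_fin[of n] by (cases "(\<integral>\<^sup>+w. g (Fn n) w \<partial>lborel)") auto
  define nf where "nf n = (SOME r. r \<ge> 0 \<and> (\<integral>\<^sup>+w. g (Fn n) w \<partial>lborel) = ennreal r)" for n
  have nf: "nf n \<ge> 0" "(\<integral>\<^sup>+w. g (Fn n) w \<partial>lborel) = ennreal (nf n)" for n
    using someI_ex[OF nfex[of n]] unfolding nf_def by auto
  have ng_low: "ng \<ge> (4/5) powr (\<alpha>+2) * (2 * b) powr (-\<alpha>-1) * (2 powr (-\<alpha>-1)/((\<alpha>+1)*b))"
  proof -
    have "(\<integral>\<^sup>+w. g G w \<partial>lborel) = (\<integral>\<^sup>+w. ennreal (((cmod (w - cnj z))^2) powr (-(\<alpha>+2)) * Im w powr \<alpha>) * indicator upper_half_plane w \<partial>lborel)"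
    proof (intro nn_integral_cong)
      fix w :: complex
      show "g G w = ennreal (((cmod (w - cnj z))^2) powr (-(\<alpha>+2)) * Im w powr \<alpha>) * indicator upper_half_plane w"
      proof (cases "w \<in> H")
        case True thus ?thesis using Gsq[OF True] by (simp add: g_def Qf_def H_def)
      next
        case False thus ?thesis by (simp add: g_def H_def)
      qed
    qed
    hence "ennreal ((4/5) powr (\<alpha>+2) * (2 * b) powr (-\<alpha>-1) * (2 powr (-\<alpha>-1)/((\<alpha>+1)*b))) \<le> ennreal ng"
      using Den_bound[of z \<alpha>] b al ng(1) unfolding b_def by simp
    thus ?thesis using ng(2) by (simp add: ennreal_le_iff)
  qed
  have openH: "open H" unfolding H_def upper_half_plane_def by (rule open_halfspace_Im_gt)
  have ph: "pseudohyp z w = cmod (phi w)" if "w \<in> H" for w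
    using pw_basic(5)[of z w] b that by (simp add: phi_def b_def inH)
  have pd_eq: "pdisc R z = (\<lambda>w. cmod (phi w)) -` {..<R} \<inter> H"
    unfolding pdisc_def using ph unfolding H_def by auto
  have contphi: "continuous_on H (\<lambda>w. cmod (phi w))"
    by (intro continuous_intros holomorphic_on_imp_continuous_on[OF holphi])
  have "open (pdisc R z)"
    unfolding pd_eq
    using continuous_on_open_vimage[OF openH, THEN iffD1, OF contphi, rule_format, of "{..<R}"] by simp
  hence pd_sets: "pdisc R z \<in> sets \<mu>" using sets_mu by simp
  have AE_hole: "AE w in \<mu>. w \<notin> pdisc R z"
    by (rule AE_not_in) (use pd_sets hole in \<open>simp add: null_sets_def\<close>)
  have measGmu: "g G \<in> borel_measurable \<mu>"
  proof -
    have "measurable \<mu> (borel :: ennreal measure) = measurable borel borel"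
      by (rule measurable_cong_sets[OF sets_mu]) simp
    thus ?thesis using measG by simp
  qed
  have step: "ennreal (R^(2*n)) * (ennreal A * ennreal ng) \<le> ennreal B * ennreal (nf n)" for n
  proof -
    have s1: "ennreal A * ennreal ng \<le> (\<integral>\<^sup>+w. g G w \<partial>\<mu>)"
      using bspec[OF samp G_in] ng(1) by (simp add: norm_eq wmu_eq)
    have s3: "(\<integral>\<^sup>+w. g (Fn n) w \<partial>\<mu>) \<le> ennreal B * ennreal (nf n)"
      using bspec[OF samp F_in[of n]] nf(2)[of n] by (simp add: norm_eq wmu_eq)
    have "ennreal (R^(2*n)) * (\<integral>\<^sup>+w. g G w \<partial>\<mu>) = (\<integral>\<^sup>+w. ennreal (R^(2*n)) * g G w \<partial>\<mu>)"
      by (rule nn_integral_cmult[symmetric, OF measGmu])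
    also have "\<dots> \<le> (\<integral>\<^sup>+w. g (Fn n) w \<partial>\<mu>)"
    proof (rule nn_integral_mono_AE)
      show "AE w in \<mu>. ennreal (R^(2*n)) * g G w \<le> g (Fn n) w"
        using AE_hole
      proof eventually_elim
        fix w assume nw: "w \<notin> pdisc R z"
        show "ennreal (R^(2*n)) * g G w \<le> g (Fn n) w"
        proof (cases "w \<in> H")
          case False thus ?thesis by (simp add: g_def)
        next
          case True
          have "pseudohyp z w \<ge> R" using nw True by (auto simp: pdisc_def H_def)
          moreover have "pseudohyp z w = cmod (phi w)"
            using pw_basic(5)[of z w] b True by (simp add: phi_def b_def inH)
          ultimately have "R \<le> cmod (phi w)" by simp
          hence "R^2 \<le> (cmod (phi w))^2" using R0 by (intro power_mono) auto
          hence "(R^2)^n \<le> ((cmod (phi w))^2)^n" using R0 by (intro power_mono) auto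
          hence "R^(2*n) \<le> ((cmod (phi w))^2)^n" by (simp add: power_mult)
          hence "R^(2*n) * ((cmod (G w))^2 * Im w powr \<alpha>) \<le> ((cmod (phi w))^2)^n * ((cmod (G w))^2 * Im w powr \<alpha>)"
            by (intro mult_right_mono) auto
          hence le: "R^(2*n) * ((cmod (G w))^2 * Im w powr \<alpha>) \<le> (cmod (Fn n w))^2 * Im w powr \<alpha>"
            unfolding Fsq by (simp add: mult.assoc)
          have "ennreal (R^(2*n)) * g G w = ennreal (R^(2*n) * ((cmod (G w))^2 * Im w powr \<alpha>))"
            using True R0 by (simp add: g_def ennreal_mult)
          also have "\<dots> \<le> ennreal ((cmod (Fn n w))^2 * Im w powr \<alpha>)" by (rule ennreal_leI[OF le])
          also have "\<dots> = g (Fn n) w" using True by (simp add: g_def)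
          finally show ?thesis .
        qed
      qed
    qed
    finally have s2: "ennreal (R^(2*n)) * (\<integral>\<^sup>+w. g G w \<partial>\<mu>) \<le> (\<integral>\<^sup>+w. g (Fn n) w \<partial>\<mu>)" .
    have "ennreal (R^(2*n)) * (ennreal A * ennreal ng) \<le> ennreal (R^(2*n)) * (\<integral>\<^sup>+w. g G w \<partial>\<mu>)"
      using s1 by (rule mult_left_mono) simp
    also note s2
    also note s3
    finally show ?thesis .
  qed
  have step_real: "R^(2*n) * (A * ng) \<le> B * nf n" for n
  proof -
    have "ennreal (R^(2*n) * (A * ng)) \<le> ennreal (B * nf n)"
      using step[of n] Ap Bp R0 ng(2) nf(1)[of n] by (simp add: ennreal_mult)
    thus ?thesis using Bp nf(1)[of n] by (simp add: ennreal_le_iff)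
  qed
  define X where "X = A / B"
  have Xp: "X > 0" using Ap Bp by (simp add: X_def)
  have ccn: "cc \<alpha> n \<ge> 0" for n by (rule cc_nonneg[OF al])
  have per_n: "cc \<alpha> n * (R^2)^n * (X * ng) \<le> cc \<alpha> n * nf n" for n
  proof -
    have "R^(2*n) * (A * ng) / B \<le> nf n" using step_real[of n] Bp by (simp add: divide_le_eq mult.commute)
    moreover have e: "R^(2*n) = (R^2)^n" by (rule power_mult)
    moreover have "(R^2)^n * (X * ng) = (R^2)^n * (A * ng) / B" by (simp add: X_def)
    ultimately have "(R^2)^n * (X * ng) \<le> nf n" by simp
    hence "cc \<alpha> n * ((R^2)^n * (X * ng)) \<le> cc \<alpha> n * nf n" using ccn by (rule mult_left_mono)
    thus ?thesis by (simp add: mult.assoc)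
  qed
  have R2: "0 \<le> R^2" "R^2 < 1" using R0 R1 by (auto simp: power_less_one_iff abs_square_less_1)
  have sumR: "(\<lambda>n. cc \<alpha> n * (R^2)^n * (X * ng)) sums ((1 - R^2) powr (-\<alpha>) * (X * ng))"
    by (rule sums_mult2[OF cc_sums[OF R2]])
  have Low: "ennreal ((1 - R^2) powr (-\<alpha>) * (X * ng)) \<le> (\<Sum>n. ennreal (cc \<alpha> n * nf n))"
  proof -
    have "ennreal ((1 - R^2) powr (-\<alpha>) * (X * ng)) = (\<Sum>n. ennreal (cc \<alpha> n * (R^2)^n * (X * ng)))"
    proof -
      have nn: "0 \<le> cc \<alpha> n * (R^2)^n * (X * ng)" for n using ccn Xp ng(2) by simp
      have "(\<Sum>n. ennreal (cc \<alpha> n * (R^2)^n * (X * ng))) = ennreal (\<Sum>n. cc \<alpha> n * (R^2)^n * (X * ng))"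
        by (rule suminf_ennreal2[OF nn sums_summable[OF sumR]])
      also have "(\<Sum>n. cc \<alpha> n * (R^2)^n * (X * ng)) = (1 - R^2) powr (-\<alpha>) * (X * ng)"
        by (rule sums_unique[OF sumR, symmetric])
      finally show ?thesis ..
    qed
    also have "\<dots> \<le> (\<Sum>n. ennreal (cc \<alpha> n * nf n))"
      by (intro suminf_le ennreal_leI per_n summableI)
    finally show ?thesis .
  qed
  have Up: "(\<Sum>n. ennreal (cc \<alpha> n * nf n)) \<le> ennreal ((4*b) powr (-\<alpha>) * (pi/(4*b^2)))"
  proof -
    have "(\<Sum>n. ennreal (cc \<alpha> n * nf n)) = (\<Sum>n. \<integral>\<^sup>+w. ennreal (cc \<alpha> n) * g (Fn n) w \<partial>lborel)"
    proof (intro suminf_cong)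
      fix n
      have "(\<integral>\<^sup>+w. ennreal (cc \<alpha> n) * g (Fn n) w \<partial>lborel) = ennreal (cc \<alpha> n) * ennreal (nf n)"
      proof -
        have mf: "g (Fn n) \<in> borel_measurable lborel" using measF by simp
        show ?thesis by (subst nn_integral_cmult[OF mf]) (simp add: nf(2))
      qed
      also have "\<dots> = ennreal (cc \<alpha> n * nf n)" using ccn nf(1) by (simp add: ennreal_mult)
      finally show "ennreal (cc \<alpha> n * nf n) = (\<integral>\<^sup>+w. ennreal (cc \<alpha> n) * g (Fn n) w \<partial>lborel)" ..
    qed
    also have "\<dots> = (\<integral>\<^sup>+w. (\<Sum>n. ennreal (cc \<alpha> n) * g (Fn n) w) \<partial>lborel)"
      apply (rule nn_integral_suminf[symmetric])
      apply (simp only: measurable_lborel2)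
      apply (intro borel_measurable_times_ennreal measF measurable_const)
      apply simp
      done
    also have "\<dots> = (\<integral>\<^sup>+w. ennreal ((4*b) powr (-\<alpha>)) * (ennreal (1/(cmod (w - cnj z))^4) * indicator upper_half_plane w) \<partial>lborel)"
    proof (intro nn_integral_cong)
      fix w :: complex
      show "(\<Sum>n. ennreal (cc \<alpha> n) * g (Fn n) w) = ennreal ((4*b) powr (-\<alpha>)) * (ennreal (1/(cmod (w - cnj z))^4) * indicator upper_half_plane w)"
      proof (cases "w \<in> H")
        case False thus ?thesis by (simp add: g_def H_def)
      next
        case True
        define t where "t = (cmod (phi w))^2"
        define K where "K = (cmod (G w))^2 * Im w powr \<alpha>"
        have Kp: "K \<ge> 0" unfolding K_def by simp
        have tt: "0 \<le> t" "t < 1" using t1[OF True] by (auto simp: t_def)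
        have sK: "(\<lambda>n. cc \<alpha> n * t^n * K) sums ((1 - t) powr (-\<alpha>) * K)"
          by (rule sums_mult2[OF cc_sums[OF tt]])
        have "(\<Sum>n. ennreal (cc \<alpha> n) * g (Fn n) w) = (\<Sum>n. ennreal (cc \<alpha> n * t^n * K))"
        proof (intro suminf_cong)
          fix n
          have "ennreal (cc \<alpha> n) * g (Fn n) w = ennreal (cc \<alpha> n) * ennreal (t^n * K)"
            using True by (simp add: g_def Fsq t_def K_def mult.assoc)
          also have "\<dots> = ennreal (cc \<alpha> n * t^n * K)"
            using ccn tt Kp by (simp add: ennreal_mult mult.assoc)
          finally show "ennreal (cc \<alpha> n) * g (Fn n) w = ennreal (cc \<alpha> n * t^n * K)" .
        qed
        also have "\<dots> = ennreal ((1 - t) powr (-\<alpha>) * K)"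
        proof -
          have nn: "0 \<le> cc \<alpha> n * t^n * K" for n using ccn tt Kp by simp
          have "(\<Sum>n. ennreal (cc \<alpha> n * t^n * K)) = ennreal (\<Sum>n. cc \<alpha> n * t^n * K)"
            by (rule suminf_ennreal2[OF nn sums_summable[OF sK]])
          also have "(\<Sum>n. cc \<alpha> n * t^n * K) = (1 - t) powr (-\<alpha>) * K"
            by (rule sums_unique[OF sK, symmetric])
          finally show ?thesis .
        qed
        also have "(1 - t) powr (-\<alpha>) * K = (4*b) powr (-\<alpha>) * (1/(cmod (w - cnj z))^4)"
        proof -
          have e1: "1 - t = 4 * Im w * b / Qf w" unfolding t_def using phisq[OF True] by simp
          have e2: "K = Qf w powr (-(\<alpha>+2)) * Im w powr \<alpha>" unfolding K_def using Gsq[OF True] by simp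
          have e3: "(Qf w)^2 = (cmod (w - cnj z))^4" unfolding Qf_def by simp
          have "(4 * Im w * b / Qf w) powr (-\<alpha>) * (Qf w powr (-(\<alpha>+2)) * Im w powr \<alpha>) = (4*b) powr (-\<alpha>) * (1/(Qf w)^2)"
            by (rule sum_pw) (use True b Qp[OF True] in \<open>auto simp: inH\<close>)
          thus ?thesis unfolding e1 e2 e3 .
        qed
        also have "ennreal ((4*b) powr (-\<alpha>) * (1/(cmod (w - cnj z))^4)) = ennreal ((4*b) powr (-\<alpha>)) * (ennreal (1/(cmod (w - cnj z))^4) * indicator upper_half_plane w)"
          using True by (simp add: ennreal_mult[symmetric] H_def)
        finally show ?thesis .
      qed
    qed
    also have "\<dots> = ennreal ((4*b) powr (-\<alpha>)) * (\<integral>\<^sup>+w. ennreal (1/(cmod (w - cnj z))^4) * indicator upper_half_plane w \<partial>lborel)"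
      by (rule nn_integral_cmult) measurable
    also have "\<dots> \<le> ennreal ((4*b) powr (-\<alpha>)) * ennreal (pi/(4*b^2))"
      using Num_bound[of z] b unfolding b_def by (intro mult_left_mono) auto
    also have "\<dots> = ennreal ((4*b) powr (-\<alpha>) * (pi/(4*b^2)))"
      by (rule ennreal_mult[symmetric]) (use b in auto)
    finally show ?thesis .
  qed
  have "ennreal ((1 - R^2) powr (-\<alpha>) * (X * ng)) \<le> ennreal ((4*b) powr (-\<alpha>) * (pi/(4*b^2)))"
    using Low Up by (rule order_trans)
  hence Hyp: "(1 - R^2) powr (-\<alpha>) * (A/B) * ng \<le> (4*b) powr (-\<alpha>) * (pi/(4*b^2))"
    using b by (simp add: ennreal_le_iff X_def mult.assoc)
  show ?thesis
    by (rule final_arith[OF al Ap Bp R0 R1 b ng_low Hyp])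
qed


end
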